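(* Let $I\subset S=K[x_1,\dots,x_t]$ be a proper monomial ideal and $n\ge 1$. Let $\mathbf X^{\mathbf a}$ be a monomial corresponding to $v(I^n)$, i.e. $\deg\mathbf X^{\mathbf a}=v(I^n)$ and $(I^n:\mathbf X^{\mathbf a})\in\operatorname{Ass}(S/I^n)$. If $\mathbf X^{\mathbf G}$ is a proper divisor of $\mathbf X^{\mathbf a}$, then $v(I^n)=v(I^n:\mathbf X^{\mathbf G})+\deg\mathbf X^{\mathbf G}$.
   Context: $K$ is a field and $S$ is standard graded. For a proper graded ideal $J$, the $v$-number is $v(J)=\min\{k\ge 0 : \exists f\in S_k,\ \mathcal P\in\operatorname{Ass}(S/J) \text{ with } (J:f)=\mathcal P\}$. $\mathbf X^{\mathbf a}$ denotes the monomial $x_1^{a_1}\cdots x_t^{a_t}$. *)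

theory Defs
  imports Main "HOL-Library.Poly_Mapping"
begin

text \<open>The polynomial ring S = K[x_v : v in 'v] (finite variable type 'v, t = CARD('v))
  is modelled as finitely supported maps from exponent vectors to coefficients.\<close>

type_synonym ('v, 'k) mpoly = "('v \<Rightarrow>\<^sub>0 nat) \<Rightarrow>\<^sub>0 'k"

definition is_ideal :: "'r::comm_ring_1 set \<Rightarrow> bool" where
  "is_ideal I \<longleftrightarrow> 0 \<in> I \<and> (\<forall>f\<in>I. \<forall>g\<in>I. f + g \<in> I) \<and> (\<forall>f\<in>I. \<forall>r. r * f \<in> I)"

definition ideal_gen :: "'r::comm_ring_1 set \<Rightarrow> 'r set" where
  "ideal_gen G = \<Inter> {I. is_ideal I \<and> G \<subseteq> I}"

definition ideal_prod :: "'r::comm_ring_1 set \<Rightarrow> 'r set \<Rightarrow> 'r set" where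
  "ideal_prod I J = ideal_gen {f * g | f g. f \<in> I \<and> g \<in> J}"

primrec ideal_pow :: "'r::comm_ring_1 set \<Rightarrow> nat \<Rightarrow> 'r set" where
  "ideal_pow I 0 = UNIV"
| "ideal_pow I (Suc n) = ideal_prod I (ideal_pow I n)"

definition colon :: "'r::comm_ring_1 set \<Rightarrow> 'r \<Rightarrow> 'r set" where
  "colon J f = {g. g * f \<in> J}"

definition is_prime_ideal :: "'r::comm_ring_1 set \<Rightarrow> bool" where
  "is_prime_ideal P \<longleftrightarrow> is_ideal P \<and> P \<noteq> UNIV \<and> (\<forall>a b. a * b \<in> P \<longrightarrow> a \<in> P \<or> b \<in> P)"

text \<open>Associated primes of S/J: prime ideals of the form (J : f).\<close>
definition Ass :: "'r::comm_ring_1 set \<Rightarrow> 'r set set" where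
  "Ass J = {P. is_prime_ideal P \<and> (\<exists>f. P = colon J f)}"

definition mono :: "('v \<Rightarrow>\<^sub>0 nat) \<Rightarrow> ('v, 'k::field) mpoly" where
  "mono a = Poly_Mapping.single a 1"

definition mdeg :: "('v::finite \<Rightarrow>\<^sub>0 nat) \<Rightarrow> nat" where
  "mdeg a = (\<Sum>i\<in>UNIV. Poly_Mapping.lookup a i)"

text \<open>f \<in> S_k: homogeneous of degree k (0 included).\<close>
definition homogeneous_of :: "nat \<Rightarrow> ('v::finite, 'k::field) mpoly \<Rightarrow> bool" where
  "homogeneous_of k f \<longleftrightarrow> (\<forall>a. Poly_Mapping.lookup f a \<noteq> 0 \<longrightarrow> mdeg a = k)"

definition monomial_ideal :: "('v::finite, 'k::field) mpoly set \<Rightarrow> bool" where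
  "monomial_ideal I \<longleftrightarrow> (\<exists>A. I = ideal_gen (mono ` A))"

definition v_number :: "('v::finite, 'k::field) mpoly set \<Rightarrow> nat" where
  "v_number J = (LEAST k. \<exists>f P. homogeneous_of k f \<and> P \<in> Ass J \<and> colon J f = P)"

end

theory Submission
  imports Defs
begin

lemma colon_colon: "colon (colon J g) f = colon J (f * g)"
  unfolding colon_def by (simp add: mult.assoc)

lemma lookup_mult_single_nz:
  fixes f :: "('v, 'k::field) mpoly"
  assumes "Poly_Mapping.lookup (f * Poly_Mapping.single G 1) c \<noteq> 0"
  shows "\<exists>d. Poly_Mapping.lookup f d \<noteq> 0 \<and> c = d + G"
proof -
  from assms obtain l where l: "Poly_Mapping.lookup f l *
      (\<Sum>q. Poly_Mapping.lookup (Poly_Mapping.single G (1::'k)) q when c = l + q) \<noteq> 0"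
    unfolding lookup_mult by (rule Sum_any.not_neutral_obtains_not_neutral)
  hence f: "Poly_Mapping.lookup f l \<noteq> 0" and
    s: "(\<Sum>q. Poly_Mapping.lookup (Poly_Mapping.single G (1::'k)) q when c = l + q) \<noteq> 0"
    by auto
  from s obtain q where "(Poly_Mapping.lookup (Poly_Mapping.single G (1::'k)) q when c = l + q) \<noteq> 0"
    by (rule Sum_any.not_neutral_obtains_not_neutral)
  hence "q = G" "c = l + q" by (auto simp: lookup_single when_def split: if_splits)
  with f show ?thesis by blast
qed

lemma mdeg_add: "mdeg (a + b) = mdeg a + mdeg b"
  unfolding mdeg_def by (simp add: lookup_add sum.distrib)

lemma homog_mult_mono:
  fixes f :: "('v::finite, 'k::field) mpoly"
  assumes "homogeneous_of k f"
  shows "homogeneous_of (k + mdeg G) (f * mono G)"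
  unfolding homogeneous_of_def
proof (intro allI impI)
  fix c assume "Poly_Mapping.lookup (f * mono G) c \<noteq> 0"
  then obtain d where "Poly_Mapping.lookup f d \<noteq> 0" "c = d + G"
    using lookup_mult_single_nz unfolding mono_def by blast
  with assms show "mdeg c = k + mdeg G"
    unfolding homogeneous_of_def by (simp add: mdeg_add)
qed

lemma homog_mono: "homogeneous_of (mdeg b) (mono b :: ('v::finite, 'k::field) mpoly)"
  unfolding homogeneous_of_def mono_def by (auto simp: lookup_single when_def split: if_splits)

theorem proposition4p6:
  fixes I :: "('v::finite, 'k::field) mpoly set"
    and n :: nat and a G :: "'v \<Rightarrow>\<^sub>0 nat"
  assumes "monomial_ideal I" and "I \<noteq> UNIV" and "n \<ge> 1"
    and "mdeg a = v_number (ideal_pow I n)"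
    and "colon (ideal_pow I n) (mono a) \<in> Ass (ideal_pow I n)"
    and "\<forall>i. Poly_Mapping.lookup G i \<le> Poly_Mapping.lookup a i" and "G \<noteq> a"
  shows "v_number (ideal_pow I n)
           = v_number (colon (ideal_pow I n) (mono G)) + mdeg G"
proof -
  define J where "J = ideal_pow I n"
  define J' where "J' = colon J (mono G)"
  define b where "b = a - G"
  have ab: "a = b + G"
    unfolding b_def using assms(6)
    by (intro poly_mapping_eqI) (simp add: lookup_add lookup_minus)
  have mab: "(mono b :: ('v, 'k) mpoly) * mono G = mono a"
    unfolding mono_def ab by (simp add: mult_single)
  have AssJ': "Ass J' = {P. is_prime_ideal P \<and> (\<exists>f. P = colon J (f * mono G))}"
    unfolding Ass_def J'_def colon_colon ..
  have cb: "colon J' (mono b) \<in> Ass J'"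
  proof -
    have "colon J' (mono b) = colon J (mono a)"
      by (simp add: J'_def colon_colon mab)
    moreover have "is_prime_ideal (colon J (mono a))"
      using assms(5) unfolding J_def[symmetric] Ass_def by blast
    ultimately show ?thesis unfolding AssJ' by (metis (mono_tags, lifting) mab mem_Collect_eq)
  qed
  have ex': "\<exists>f P. homogeneous_of (mdeg b) f \<and> P \<in> Ass J' \<and> colon J' f = P"
    using cb homog_mono by blast
  have le1: "v_number J' \<le> mdeg b"
    unfolding v_number_def by (rule Least_le) (rule ex')
  have "\<exists>f P. homogeneous_of (v_number J') f \<and> P \<in> Ass J' \<and> colon J' f = P"
    unfolding v_number_def by (rule LeastI_ex) (use ex' in blast)
  then obtain f P where f: "homogeneous_of (v_number J') f" "P \<in> Ass J'" "colon J' f = P"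
    by blast
  have "homogeneous_of (v_number J' + mdeg G) (f * mono G)"
    by (rule homog_mult_mono[OF f(1)])
  moreover have "P \<in> Ass J" "colon J (f * mono G) = P"
    using f(2,3) unfolding AssJ' Ass_def J'_def colon_colon by auto
  ultimately have le2: "v_number J \<le> v_number J' + mdeg G"
    unfolding v_number_def by (intro Least_le) blast
  have "v_number J = mdeg b + mdeg G"
    using assms(4) ab mdeg_add J_def by metis
  with le1 le2 show ?thesis unfolding J_def[symmetric] J'_def[symmetric] by linarith
qed

end
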